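(* Let $n\geq 1$ be an integer, let $\Omega_s\subseteq[-1,1]$ be a Lebesgue measurable set of Lebesgue measure $s\geq 0$ such that $\zeta=\max\{|x|: x\in\Omega_s\}$ exists, and suppose $1-\zeta\geq 1/n$. Then for every real polynomial $p$ of degree $\leq n$, \[ \int_{\Omega_s}|p(x)|\,dx\leq\frac{s\,n^{3/2}}{(1-\zeta^2)^{1/4}}\int_{-1}^1|p(x)|\,dx . \] *)

theory Defs
  imports "HOL-Analysis.Analysis" "HOL-Computational_Algebra.Polynomial"
begin

end

theory Submission
  imports Defs
begin

definition sinspan :: "nat \<Rightarrow> (real \<Rightarrow> real) \<Rightarrow> bool" where
  "sinspan m f \<longleftrightarrow> (\<exists>b. \<forall>x. f x = (\<Sum>j\<le>m. b j * sin (real j * x)))"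

lemma sinspan_mono: "sinspan m f \<Longrightarrow> m \<le> m' \<Longrightarrow> sinspan m' f"
proof -
  assume "sinspan m f" "m \<le> m'"
  then obtain b where b: "\<And>x. f x = (\<Sum>j\<le>m. b j * sin (real j * x))" unfolding sinspan_def by blast
  define c where "c j = (if j \<le> m then b j else 0)" for j
  have "f x = (\<Sum>j\<le>m'. c j * sin (real j * x))" for x
  proof -
    have "(\<Sum>j\<le>m'. c j * sin (real j * x)) = (\<Sum>j\<le>m. c j * sin (real j * x))"
      by (rule sum.mono_neutral_right) (use \<open>m \<le> m'\<close> in \<open>auto simp: c_def\<close>)
    also have "\<dots> = f x" by (simp add: b c_def)
    finally show ?thesis by simp
  qed
  then show ?thesis unfolding sinspan_def by blast
qed

lemma sinspan_add: "sinspan m f \<Longrightarrow> sinspan m g \<Longrightarrow> sinspan m (\<lambda>x. f x + g x)"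
  unfolding sinspan_def
proof (elim exE)
  fix b c assume b: "\<forall>x. f x = (\<Sum>j\<le>m. b j * sin (real j * x))" and c: "\<forall>x. g x = (\<Sum>j\<le>m. c j * sin (real j * x))"
  show "\<exists>d. \<forall>x. f x + g x = (\<Sum>j\<le>m. d j * sin (real j * x))"
    by (rule exI[of _ "\<lambda>j. b j + c j"]) (simp add: b c sum.distrib distrib_right)
qed

lemma sinspan_cmult: "sinspan m f \<Longrightarrow> sinspan m (\<lambda>x. a * f x)"
  unfolding sinspan_def
proof (elim exE)
  fix b assume b: "\<forall>x. f x = (\<Sum>j\<le>m. b j * sin (real j * x))"
  show "\<exists>d. \<forall>x. a * f x = (\<Sum>j\<le>m. d j * sin (real j * x))"
    by (rule exI[of _ "\<lambda>j. a * b j"]) (simp add: b sum_distrib_left mult.assoc)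
qed

lemma sinspan_zero: "sinspan m (\<lambda>x. 0)"
  unfolding sinspan_def by (rule exI[of _ "\<lambda>j. 0"]) simp

lemma sinspan_sin: "k \<le> m \<Longrightarrow> sinspan m (\<lambda>x. sin (real k * x))"
  unfolding sinspan_def
proof (rule exI[of _ "\<lambda>j. if j = k then 1 else 0"], intro allI impI)
  fix x assume "k \<le> m"
  have e: "(\<lambda>j. (if j = k then 1 else 0) * sin (real j * x)) = (\<lambda>j. if j = k then sin (real j * x) else 0)"
    by auto
  then show "sin (real k * x) = (\<Sum>j\<le>m. (if j = k then 1 else 0) * sin (real j * x))"
    unfolding e using \<open>k \<le> m\<close> by (simp add: sum.delta)
qed

lemma sinspan_sum: "finite A \<Longrightarrow> (\<And>i. i \<in> A \<Longrightarrow> sinspan m (g i)) \<Longrightarrow> sinspan m (\<lambda>x. \<Sum>i\<in>A. g i x)"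
  by (induction A rule: finite_induct) (auto intro: sinspan_add sinspan_zero)

lemma sinspan_cos: "sinspan m f \<Longrightarrow> sinspan (Suc m) (\<lambda>x. cos x * f x)"
proof -
  assume "sinspan m f"
  then obtain b where b: "\<And>x. f x = (\<Sum>j\<le>m. b j * sin (real j * x))" unfolding sinspan_def by blast
  have e: "cos x * f x = (\<Sum>j\<le>m. b j * (sin (real (Suc j) * x) / 2 + sin ((real j - 1) * x) / 2))" for x
    unfolding b sum_distrib_left
  proof (rule sum.cong[OF refl])
    fix j
    have "cos x * sin (real j * x) = (sin (real j * x + x) + sin (real j * x - x)) / 2"
      by (simp add: sin_add sin_diff algebra_simps)
    also have "real j * x + x = real (Suc j) * x" by (simp add: algebra_simps)
    also have "real j * x - x = (real j - 1) * x" by (simp add: algebra_simps)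
    finally have h: "cos x * sin (real j * x) = sin (real (Suc j) * x) / 2 + sin ((real j - 1) * x) / 2"
      by (simp add: add_divide_distrib)
    show "cos x * (b j * sin (real j * x)) = b j * (sin (real (Suc j) * x) / 2 + sin ((real j - 1) * x) / 2)"
      by (metis h mult.left_commute)
  qed
  have t: "sinspan (Suc m) (\<lambda>x. b j * (sin (real (Suc j) * x) / 2 + sin ((real j - 1) * x) / 2))" if "j \<le> m" for j
  proof (cases j)
    case 0
    have "(\<lambda>x. b j * (sin (real (Suc j) * x) / 2 + sin ((real j - 1) * x) / 2)) = (\<lambda>x. 0)"
      using 0 by (auto simp: fun_eq_iff)
    then show ?thesis using sinspan_zero by simp
  next
    case (Suc i)
    have "(\<lambda>x. b j * (sin (real (Suc j) * x) / 2 + sin ((real j - 1) * x) / 2))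
        = (\<lambda>x. (b j / 2) * sin (real (Suc j) * x) + (b j / 2) * sin (real i * x))"
      using Suc by (auto simp: fun_eq_iff algebra_simps)
    moreover have "sinspan (Suc m) (\<lambda>x. (b j / 2) * sin (real (Suc j) * x) + (b j / 2) * sin (real i * x))"
      using that Suc by (intro sinspan_add sinspan_cmult sinspan_sin) auto
    ultimately show ?thesis by simp
  qed
  show ?thesis unfolding e by (rule sinspan_sum) (use t in auto)
qed

lemma sinspan_poly: "degree p \<le> n \<Longrightarrow> sinspan (Suc n) (\<lambda>x. poly p (cos x) * sin x)"
proof (induction n arbitrary: p)
  case 0
  then obtain c where p: "p = [:c:]" by (metis degree0_coeffs le_zero_eq)
  show ?case unfolding p using sinspan_cmult[OF sinspan_sin[of 1 1], of c] by simp
next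
  case (Suc n)
  obtain a q where p: "p = pCons a q" by (cases p)
  have "degree q \<le> n" using Suc.prems p by (auto simp: degree_pCons_eq_if split: if_splits)
  then have "sinspan (Suc n) (\<lambda>x. poly q (cos x) * sin x)" by (rule Suc.IH)
  then have h: "sinspan (Suc (Suc n)) (\<lambda>x. cos x * (poly q (cos x) * sin x))" by (rule sinspan_cos)
  have "sinspan (Suc (Suc n)) (\<lambda>x. a * sin (real 1 * x) + cos x * (poly q (cos x) * sin x))"
    by (intro sinspan_add sinspan_cmult sinspan_sin h) auto
  then show ?case unfolding p by (simp add: algebra_simps)
qed


lemma aux_cancel: "(d::real) \<noteq> 0 \<Longrightarrow> c * d / (2 * d) = c / 2"
  by (simp add: field_simps)

lemma sin_orth:
  assumes "1 \<le> k"
  shows "((\<lambda>x. sin (real j * x) * sin (real k * x)) has_integral (if j = k then pi/2 else 0)) {0..pi}"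
proof (cases "j = k")
  case True
  define F where "F x = x/2 - sin (2 * real k * x) / (4 * real k)" for x
  have d: "(F has_vector_derivative (sin (real j * x) * sin (real k * x))) (at x within {0..pi})" for x
  proof -
    have "(F has_real_derivative (1/2 - cos (2 * real k * x) * (2 * real k) / (4 * real k))) (at x)"
      unfolding F_def by (auto intro!: derivative_eq_intros)
    moreover have "1/2 - cos (2 * real k * x) * (2 * real k) / (4 * real k) = sin (real j * x) * sin (real k * x)"
    proof -
      have c: "cos (2 * real k * x) = 1 - 2 * (sin (real k * x))^2"
        using cos_double_sin[of "real k * x"] by (simp add: mult.assoc)
      have "cos (2 * real k * x) * (2 * real k) / (4 * real k) = cos (2 * real k * x) / 2"
        using assms by simp
      then show ?thesis using True c by (simp add: power2_eq_square)
    qed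
    ultimately show ?thesis
      by (simp add: has_real_derivative_iff_has_vector_derivative[symmetric] has_field_derivative_at_within)
  qed
  have e: "F pi - F 0 = pi/2"
  proof -
    have "sin (2 * real k * pi) = 0" using sin_npi[of "2*k"] by (simp add: mult.commute)
    then show ?thesis by (simp add: F_def)
  qed
  show ?thesis using fundamental_theorem_of_calculus[OF pi_ge_zero d] True unfolding e by simp
next
  case False
  define F where "F x = sin ((real j - real k) * x) / (2 * (real j - real k)) - sin ((real j + real k) * x) / (2 * (real j + real k))" for x
  have ne: "real j - real k \<noteq> 0" "real j + real k \<noteq> 0" using False assms by auto
  have d: "(F has_vector_derivative (sin (real j * x) * sin (real k * x))) (at x within {0..pi})" for x
  proof -
    have "(F has_real_derivative (cos ((real j - real k) * x) * (real j - real k) / (2 * (real j - real k))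
           - cos ((real j + real k) * x) * (real j + real k) / (2 * (real j + real k)))) (at x)"
      unfolding F_def using ne False by (auto intro!: derivative_eq_intros)
    moreover have "cos ((real j - real k) * x) * (real j - real k) / (2 * (real j - real k))
           - cos ((real j + real k) * x) * (real j + real k) / (2 * (real j + real k)) = sin (real j * x) * sin (real k * x)"
    proof -
      have a: "cos ((real j - real k) * x) * (real j - real k) / (2 * (real j - real k)) = cos ((real j - real k) * x) / 2"
        using ne(1) by (rule aux_cancel)
      have b: "cos ((real j + real k) * x) * (real j + real k) / (2 * (real j + real k)) = cos ((real j + real k) * x) / 2"
        using ne(2) by (rule aux_cancel)
      have c: "cos ((real j - real k) * x) / 2 - cos ((real j + real k) * x) / 2 = sin (real j * x) * sin (real k * x)"
        by (simp add: left_diff_distrib distrib_right cos_diff cos_add diff_divide_distrib[symmetric])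
      show ?thesis unfolding a b c ..
    qed
    ultimately show ?thesis
      by (simp add: has_real_derivative_iff_has_vector_derivative[symmetric] has_field_derivative_at_within)
  qed
  have "F pi - F 0 = 0"
  proof -
    have "sin ((real j - real k) * pi) = 0"
      using sin_npi_int[of "int j - int k"] by (simp add: mult.commute)
    moreover have "sin ((real j + real k) * pi) = 0"
      using sin_npi[of "j + k"] by simp
    ultimately show ?thesis by (simp add: F_def)
  qed
  then show ?thesis using fundamental_theorem_of_calculus[OF pi_ge_zero d] False by simp
qed


lemma sinspan_bound:
  assumes "sinspan m f"
  shows "pi/2 * \<bar>f t\<bar> \<le> real m * integral {0..pi} (\<lambda>x. \<bar>f x\<bar>)"
proof -
  obtain b where b: "\<And>x. f x = (\<Sum>j\<le>m. b j * sin (real j * x))"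
    using assms unfolding sinspan_def by blast
  have fe: "f = (\<lambda>x. \<Sum>j\<le>m. b j * sin (real j * x))" using b by auto
  have cont: "continuous_on {0..pi} f" unfolding fe by (intro continuous_intros)
  define F where "F x = (\<Sum>k\<in>{1..m}. sin (real k * t) * sin (real k * x))" for x
  have contF: "continuous_on {0..pi} F" unfolding F_def by (intro continuous_intros)
  have inner: "((\<lambda>x. f x * sin (real k * x)) has_integral (pi/2 * b k)) {0..pi}"
    if k: "k \<in> {1..m}" for k
  proof -
    have "((\<lambda>x. \<Sum>j\<le>m. b j * (sin (real j * x) * sin (real k * x))) has_integral
            (\<Sum>j\<le>m. b j * (if j = k then pi/2 else 0))) {0..pi}"
      using k by (intro has_integral_sum has_integral_mult_right sin_orth) auto
    moreover have "(\<Sum>j\<le>m. b j * (if j = k then pi/2 else 0)) = pi/2 * b k"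
    proof -
      have "(\<Sum>j\<le>m. b j * (if j = k then pi/2 else 0)) = (\<Sum>j\<le>m. if j = k then b j * (pi/2) else 0)"
        by (intro sum.cong) auto
      also have "\<dots> = pi/2 * b k" using k by (simp add: sum.delta)
      finally show ?thesis .
    qed
    moreover have "(\<lambda>x. \<Sum>j\<le>m. b j * (sin (real j * x) * sin (real k * x))) = (\<lambda>x. f x * sin (real k * x))"
      by (auto simp: b sum_distrib_right mult.assoc)
    ultimately show ?thesis by simp
  qed
  have "((\<lambda>x. \<Sum>k\<in>{1..m}. sin (real k * t) * (f x * sin (real k * x))) has_integral
          (\<Sum>k\<in>{1..m}. sin (real k * t) * (pi/2 * b k))) {0..pi}"
    by (intro has_integral_sum has_integral_mult_right inner) auto
  moreover have "(\<lambda>x. \<Sum>k\<in>{1..m}. sin (real k * t) * (f x * sin (real k * x))) = (\<lambda>x. f x * F x)"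
    by (auto simp: F_def sum_distrib_left mult.assoc mult.left_commute)
  moreover have "(\<Sum>k\<in>{1..m}. sin (real k * t) * (pi/2 * b k)) = pi/2 * f t"
  proof -
    have "(\<Sum>k\<le>m. b k * sin (real k * t)) = (\<Sum>k\<in>{1..m}. b k * sin (real k * t))"
      by (rule sum.mono_neutral_right) (auto simp: Suc_le_eq)
    then show ?thesis by (simp add: b sum_distrib_left mult.commute mult.left_commute mult.assoc)
  qed
  ultimately have I: "((\<lambda>x. f x * F x) has_integral (pi/2 * f t)) {0..pi}" by metis
  have Fb: "\<bar>F x\<bar> \<le> real m" for x
  proof -
    have "\<bar>F x\<bar> \<le> (\<Sum>k\<in>{1..m}. \<bar>sin (real k * t) * sin (real k * x)\<bar>)"
      unfolding F_def by (rule sum_abs)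
    also have "\<dots> \<le> (\<Sum>k\<in>{1..m}. 1)"
      by (intro sum_mono) (simp add: abs_mult mult_le_one)
    finally show ?thesis by simp
  qed
  have "norm (integral {0..pi} (\<lambda>x. f x * F x)) \<le> integral {0..pi} (\<lambda>x. real m * \<bar>f x\<bar>)"
  proof (rule integral_norm_bound_integral)
    show "(\<lambda>x. f x * F x) integrable_on {0..pi}"
      by (rule integrable_continuous_interval) (intro continuous_intros cont contF)
    show "(\<lambda>x. real m * \<bar>f x\<bar>) integrable_on {0..pi}"
      by (rule integrable_continuous_interval) (intro continuous_intros cont)
    fix x show "norm (f x * F x) \<le> real m * \<bar>f x\<bar>"
      using mult_right_mono[OF Fb[of x] abs_ge_zero[of "f x"]] by (simp add: abs_mult mult.commute)
  qed
  then show ?thesis using integral_unique[OF I] by (simp add: abs_mult)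
qed


lemma poly_subst_integral:
  fixes p :: "real poly"
  shows "integral {0..pi} (\<lambda>x. \<bar>poly p (cos x) * sin x\<bar>) = integral {-1..1} (\<lambda>t. \<bar>poly p t\<bar>)"
proof -
  have "((\<lambda>x. (- sin x) *\<^sub>R \<bar>poly p (cos x)\<bar>) has_integral
          (integral {cos 0..cos pi} (\<lambda>t. \<bar>poly p t\<bar>) - integral {cos pi..cos 0} (\<lambda>t. \<bar>poly p t\<bar>))) {0..pi}"
    by (rule has_integral_substitution_general[of "{}" 0 pi cos "-1" 1])
       (auto intro!: continuous_intros derivative_eq_intros)
  then have "((\<lambda>x. (- sin x) * \<bar>poly p (cos x)\<bar>) has_integral
          (- integral {-1..1} (\<lambda>t. \<bar>poly p t\<bar>))) {0..pi}" by simp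
  then have "((\<lambda>x. \<bar>poly p (cos x) * sin x\<bar>) has_integral
          (integral {-1..1} (\<lambda>t. \<bar>poly p t\<bar>))) {0..pi}"
  proof -
    assume h: "((\<lambda>x. (- sin x) * \<bar>poly p (cos x)\<bar>) has_integral
          (- integral {-1..1} (\<lambda>t. \<bar>poly p t\<bar>))) {0..pi}"
    have "((\<lambda>x. - ((- sin x) * \<bar>poly p (cos x)\<bar>)) has_integral
          (- (- integral {-1..1} (\<lambda>t. \<bar>poly p t\<bar>)))) {0..pi}"
      by (rule has_integral_neg[OF h])
    then have h2: "((\<lambda>x. - ((- sin x) * \<bar>poly p (cos x)\<bar>)) has_integral
          (integral {-1..1} (\<lambda>t. \<bar>poly p t\<bar>))) {0..pi}" unfolding minus_minus .
    have eq: "- (- sin x * \<bar>poly p (cos x)\<bar>) = \<bar>poly p (cos x) * sin x\<bar>" if "x \<in> {0..pi}" for x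
    proof -
      have "sin x \<ge> 0" using that by (auto intro: sin_ge_zero)
      then show ?thesis by (simp add: abs_mult)
    qed
    show ?thesis by (rule has_integral_eq[OF eq h2])
  qed
  then show ?thesis by (rule integral_unique)
qed

lemma ereal_m1: "ereal (-1) = -1" by (simp add: one_ereal_def)
lemma ereal_1: "ereal 1 = 1" by (simp add: one_ereal_def)

lemma poly_pointwise:
  fixes p :: "real poly"
  assumes "degree p \<le> n" "\<bar>x\<bar> \<le> 1"
  shows "pi/2 * (\<bar>poly p x\<bar> * sqrt (1 - x\<^sup>2)) \<le> real (Suc n) * (LBINT t=-1..1. \<bar>poly p t\<bar>)"
proof -
  have L: "(LBINT t=-1..1. \<bar>poly p t\<bar>) = integral {-1..1} (\<lambda>t. \<bar>poly p t\<bar>)"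
  proof -
    have "set_integrable lborel {-1..1::real} (\<lambda>t. \<bar>poly p t\<bar>)"
      by (intro borel_integrable_atLeastAtMost' continuous_intros)
    then show ?thesis
      using interval_integral_eq_integral[of "-1" 1 "\<lambda>t. \<bar>poly p t\<bar>", unfolded ereal_m1 ereal_1] by simp
  qed
  have x: "-1 \<le> x" "x \<le> 1" using assms(2) by auto
  have "pi/2 * \<bar>poly p (cos (arccos x)) * sin (arccos x)\<bar> \<le> real (Suc n) * integral {0..pi} (\<lambda>y. \<bar>poly p (cos y) * sin y\<bar>)"
    by (rule sinspan_bound[OF sinspan_poly[OF assms(1)]])
  moreover have "cos (arccos x) = x" using x by (simp add: cos_arccos)
  moreover have "sin (arccos x) = sqrt (1 - x\<^sup>2)" using x by (simp add: sin_arccos)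
  moreover have "x\<^sup>2 \<le> 1" using assms(2) by (simp add: abs_square_le_1)
  ultimately show ?thesis unfolding L poly_subst_integral by (simp add: abs_mult)
qed


lemma fin_meas:
  assumes "\<Omega> \<in> sets lebesgue" "\<Omega> \<subseteq> {-1..1::real}"
  shows "emeasure lebesgue \<Omega> \<noteq> \<infinity>"
proof -
  have "{-1..1::real} \<in> lmeasurable" using lmeasurable_interval(1)[of "-1" "1::real"] by simp
  then have "emeasure lebesgue \<Omega> \<le> emeasure lebesgue {-1..1::real}"
    using assms by (intro emeasure_mono) auto
  moreover have "emeasure lebesgue {-1..1::real} \<noteq> \<infinity>"
    using \<open>{-1..1::real} \<in> lmeasurable\<close> by (simp add: fmeasurable_def)
  moreover have "(2::ennreal) \<noteq> top" by simp
  ultimately show ?thesis using neq_top_trans by force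
qed

lemma meas_zero:
  assumes "\<Omega> \<subseteq> {0::real}"
  shows "measure lebesgue \<Omega> = 0"
proof -
  have "\<Omega> = {} \<or> \<Omega> = {0}" using assms by auto
  then show ?thesis by auto
qed

lemma final_ineq:
  fixes A :: real and n :: nat
  assumes "n \<ge> 2" "A > 0" "A * real n \<ge> 1"
  shows "2 * real (Suc n) / (pi * sqrt A) \<le> real n powr (3/2) / A powr (1/4)"
proof -
  define q where "q = A powr (1/4)"
  define r where "r = real n powr (1/4)"
  have q0: "q > 0" using assms by (simp add: q_def)
  have r1: "r \<ge> 1" using assms by (simp add: r_def ge_one_powr_ge_zero)
  have sq: "sqrt A = q * q"
  proof -
    have "q * q = A powr (1/2)" unfolding q_def by (simp add: powr_add[symmetric])
    also have "\<dots> = sqrt A" using assms by (simp add: powr_half_sqrt)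
    finally show ?thesis by simp
  qed
  have n32: "real n powr (3/2) = real n * (r * r)"
    using assms by (simp add: r_def powr_add[symmetric] powr_mult_base)
  have qr: "q * r \<ge> 1"
  proof -
    have "q * r = (A * real n) powr (1/4)" using assms by (simp add: q_def r_def powr_mult)
    also have "\<dots> \<ge> 1" using assms by (simp add: ge_one_powr_ge_zero)
    finally show ?thesis .
  qed
  have "real n * r * (q * r) \<ge> real n" using r1 qr assms
    by (metis mult.right_neutral mult_mono' of_nat_0_le_iff order_trans zero_le_one mult_left_mono)
  then have key: "pi * (real n * (r * r) * q) \<ge> 2 * real (Suc n)"
  proof -
    assume h: "real n * r * (q * r) \<ge> real n"
    have eq: "real n * (r * r) * q = real n * r * (q * r)" by (simp add: algebra_simps)
    have "real n * (r * r) * q \<ge> real n" using h unfolding eq .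
    moreover have "pi \<ge> 3" using pi_gt3 by simp
    ultimately have "pi * (real n * (r * r) * q) \<ge> 3 * real n"
      by (intro mult_mono) auto
    moreover have "3 * real n \<ge> 2 * real (Suc n)" using assms by simp
    ultimately show ?thesis by linarith
  qed
  have "2 * real (Suc n) / (pi * sqrt A) = 2 * real (Suc n) / (pi * q * q)" by (simp add: sq mult.assoc)
  also have "\<dots> \<le> pi * (real n * (r * r) * q) / (pi * q * q)"
    using key q0 pi_gt_zero by (intro divide_right_mono) auto
  also have "\<dots> = real n * (r * r) / q"
    using q0 pi_gt_zero by (simp add: field_simps)
  finally show ?thesis by (simp add: n32 q_def)
qed


theorem theoremA1:
  fixes n :: nat and \<Omega> :: "real set" and s \<zeta> :: real and p :: "real poly"
  assumes "n \<ge> 1"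
    and "\<Omega> \<in> sets lebesgue"
    and "\<Omega> \<subseteq> {-1..1}"
    and "s = measure lebesgue \<Omega>"
    and "s \<ge> 0"
    and "\<zeta> \<in> abs ` \<Omega>" and "\<forall>x\<in>\<Omega>. \<bar>x\<bar> \<le> \<zeta>"
    and "1 - \<zeta> \<ge> 1 / real n"
    and "degree p \<le> n"
  shows "(LINT x:\<Omega>|lebesgue. \<bar>poly p x\<bar>)
           \<le> s * real n powr (3/2) / (1 - \<zeta>\<^sup>2) powr (1/4) * (LBINT x=-1..1. \<bar>poly p x\<bar>)"
proof -
  define L where "L = (LBINT x=-1..1. \<bar>poly p x\<bar>)"
  define A where "A = 1 - \<zeta>\<^sup>2"
  have z0: "\<zeta> \<ge> 0" using assms(6) by auto
  have n0: "real n > 0" using assms(1) by simp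
  have "1 / real n > 0" using n0 by simp
  then have z1: "\<zeta> < 1" using assms(8) by linarith
  have A0: "A > 0" unfolding A_def using z0 z1 by (simp add: abs_square_less_1)
  have An: "A * real n \<ge> 1"
  proof -
    have "\<zeta> * \<zeta> \<le> 1 * \<zeta>" using z0 z1 by (intro mult_right_mono) auto
    then have "A \<ge> 1 - \<zeta>" unfolding A_def by (simp add: power2_eq_square)
    then have "A \<ge> 1 / real n" using assms(8) by linarith
    then show ?thesis using n0 by (simp add: field_simps)
  qed
  have L0: "L \<ge> 0"
  proof -
    have "L = integral {-1..1} (\<lambda>t. \<bar>poly p t\<bar>)"
    proof -
      have "set_integrable lborel {-1..1::real} (\<lambda>t. \<bar>poly p t\<bar>)"
        by (intro borel_integrable_atLeastAtMost' continuous_intros)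
      then show ?thesis unfolding L_def
        using interval_integral_eq_integral[of "-1" 1 "\<lambda>t. \<bar>poly p t\<bar>", unfolded ereal_m1 ereal_1] by simp
    qed
    also have "\<dots> \<ge> 0" by (rule integral_nonneg) (auto intro!: integrable_continuous_interval continuous_intros)
    finally show ?thesis .
  qed
  define C where "C = 2 * real (Suc n) / (pi * sqrt A) * L"
  have bound: "\<bar>poly p x\<bar> \<le> C" if x: "x \<in> \<Omega>" for x
  proof -
    have ax: "\<bar>x\<bar> \<le> \<zeta>" using assms(7) x by auto
    have "x\<^sup>2 \<le> \<zeta>\<^sup>2" using power_mono[OF ax abs_ge_zero, of 2] by simp
    then have Ax: "1 - x\<^sup>2 \<ge> A" unfolding A_def by simp
    have sA: "sqrt (1 - x\<^sup>2) \<ge> sqrt A" using Ax by simp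
    have sA0: "sqrt A > 0" using A0 by simp
    have "pi/2 * (\<bar>poly p x\<bar> * sqrt (1 - x\<^sup>2)) \<le> real (Suc n) * L"
      unfolding L_def by (rule poly_pointwise[OF assms(9)]) (use ax z1 in simp)
    moreover have "pi/2 * (\<bar>poly p x\<bar> * sqrt A) \<le> pi/2 * (\<bar>poly p x\<bar> * sqrt (1 - x\<^sup>2))"
      using sA pi_gt_zero by (intro mult_left_mono) auto
    ultimately have "pi/2 * (\<bar>poly p x\<bar> * sqrt A) \<le> real (Suc n) * L"
      by linarith
    then show ?thesis unfolding C_def using sA0 pi_gt_zero by (simp add: field_simps)
  qed
  have intf: "set_integrable lebesgue \<Omega> (\<lambda>x. \<bar>poly p x\<bar>)"
  proof -
    have "(\<lambda>x. \<bar>poly p x\<bar>) absolutely_integrable_on {-1..1::real}"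
      by (intro absolutely_integrable_continuous_real continuous_intros)
    then show ?thesis using set_integrable_subset assms(2,3) by blast
  qed
  have intC: "set_integrable lebesgue \<Omega> (\<lambda>x. C)"
  proof -
    have "(\<lambda>x. C) absolutely_integrable_on {-1..1::real}"
      by (intro absolutely_integrable_continuous_real continuous_intros)
    then show ?thesis using set_integrable_subset assms(2,3) by blast
  qed
  have "(LINT x:\<Omega>|lebesgue. \<bar>poly p x\<bar>) \<le> (LINT x:\<Omega>|lebesgue. C)"
    by (rule set_integral_mono[OF intf intC bound])
  also have "\<dots> = s * C"
    using set_integral_const[OF assms(2) fin_meas[OF assms(2,3)], of C] assms(4) by simp
  also have "\<dots> \<le> s * real n powr (3/2) / (1 - \<zeta>\<^sup>2) powr (1/4) * L"
  proof (cases "n = 1")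
    case True
    then have "\<zeta> \<le> 0" using assms(8) by simp
    then have "\<Omega> \<subseteq> {0}" using assms(7) z0 by force
    then have "s = 0" using assms(4) meas_zero by simp
    then show ?thesis by simp
  next
    case False
    then have "n \<ge> 2" using assms(1) by simp
    have "2 * real (Suc n) / (pi * sqrt A) \<le> real n powr (3/2) / A powr (1/4)"
      by (rule final_ineq[OF \<open>n \<ge> 2\<close> A0 An])
    then have "C \<le> real n powr (3/2) / A powr (1/4) * L"
      unfolding C_def using L0 by (rule mult_right_mono)
    then have "s * C \<le> s * (real n powr (3/2) / A powr (1/4) * L)"
      using assms(5) by (rule mult_left_mono)
    then show ?thesis by (simp add: A_def mult.assoc)
  qed
  finally show ?thesis unfolding L_def .
qed

end
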